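(* Let $(\mathfrak g,[\cdot,\cdot]_{\mathfrak g},E)$ be an ENL algebra and $K:W\to\mathfrak g$ an ENE-relative Rota–Baxter operator with respect to an ENE-representation $(W;T,\rho)$. Define $[u,v]_K:=\rho(Ku)v-\rho(Kv)u$ for $u,v\in W$. Then $(W,[\cdot,\cdot]_K,T)$ is an ENL algebra.
   Context: Vector spaces are finite-dimensional over an algebraically closed field of characteristic zero. An ENL algebra is a Lie algebra with linear $E$ satisfying $E[x,y]=[x,Ey]$ for all $x,y$. An ENE-representation $(W;T,\rho)$ of $(\mathfrak g,E)$ is a Lie algebra representation $\rho:\mathfrak g\to\mathfrak{gl}(W)$ with linear $T:W\to W$ such that $T(\rho(x)u)=\rho(Ex)u=\rho(x)(Tu)$. An ENE-relative Rota–Baxter operator with respect to $(W;T,\rho)$ is a linear $K:W\to\mathfrak g$ with $[Ku,Kv]_{\mathfrak g}=K(\rho(Ku)v-\rho(Kv)u)$ for all $u,v\in W$ and $E\circ K=K\circ T$. *)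

theory Defs
  imports "HOL-Analysis.Analysis" "HOL-Computational_Algebra.Polynomial"
begin

definition fin_vs :: "('k::field \<Rightarrow> 'v::ab_group_add \<Rightarrow> 'v) \<Rightarrow> bool" where
  "fin_vs s \<longleftrightarrow> (\<exists>B. finite_dimensional_vector_space s B)"

definition is_linear :: "('k::field \<Rightarrow> 'v::ab_group_add \<Rightarrow> 'v) \<Rightarrow>
    ('k \<Rightarrow> 'w::ab_group_add \<Rightarrow> 'w) \<Rightarrow> ('v \<Rightarrow> 'w) \<Rightarrow> bool" where
  "is_linear s1 s2 f \<longleftrightarrow> Vector_Spaces.linear s1 s2 f"

definition lie_algebra :: "('k::field \<Rightarrow> 'g::ab_group_add \<Rightarrow> 'g) \<Rightarrow> ('g \<Rightarrow> 'g \<Rightarrow> 'g) \<Rightarrow> bool" where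
  "lie_algebra s br \<longleftrightarrow> vector_space s
     \<and> (\<forall>x. is_linear s s (br x)) \<and> (\<forall>y. is_linear s s (\<lambda>x. br x y))
     \<and> (\<forall>x. br x x = 0)
     \<and> (\<forall>x y z. br x (br y z) + br y (br z x) + br z (br x y) = 0)"

definition ENL_algebra :: "('k::field \<Rightarrow> 'g::ab_group_add \<Rightarrow> 'g) \<Rightarrow> ('g \<Rightarrow> 'g \<Rightarrow> 'g) \<Rightarrow> ('g \<Rightarrow> 'g) \<Rightarrow> bool" where
  "ENL_algebra s br E \<longleftrightarrow> lie_algebra s br \<and> is_linear s s E
     \<and> (\<forall>x y. E (br x y) = br x (E y))"

definition lie_rep :: "('k::field \<Rightarrow> 'g::ab_group_add \<Rightarrow> 'g) \<Rightarrow> ('g \<Rightarrow> 'g \<Rightarrow> 'g) \<Rightarrow>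
    ('k \<Rightarrow> 'w::ab_group_add \<Rightarrow> 'w) \<Rightarrow> ('g \<Rightarrow> 'w \<Rightarrow> 'w) \<Rightarrow> bool" where
  "lie_rep s br sw rho \<longleftrightarrow> vector_space sw
     \<and> (\<forall>x y u. rho (x + y) u = rho x u + rho y u)
     \<and> (\<forall>c x u. rho (s c x) u = sw c (rho x u))
     \<and> (\<forall>x. is_linear sw sw (rho x))
     \<and> (\<forall>x y u. rho (br x y) u = rho x (rho y u) - rho y (rho x u))"

definition ENE_rep :: "('k::field \<Rightarrow> 'g::ab_group_add \<Rightarrow> 'g) \<Rightarrow> ('g \<Rightarrow> 'g \<Rightarrow> 'g) \<Rightarrow> ('g \<Rightarrow> 'g) \<Rightarrow>
    ('k \<Rightarrow> 'w::ab_group_add \<Rightarrow> 'w) \<Rightarrow> ('w \<Rightarrow> 'w) \<Rightarrow> ('g \<Rightarrow> 'w \<Rightarrow> 'w) \<Rightarrow> bool" where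
  "ENE_rep s br E sw T rho \<longleftrightarrow> lie_rep s br sw rho \<and> is_linear sw sw T
     \<and> (\<forall>x u. T (rho x u) = rho (E x) u \<and> rho (E x) u = rho x (T u))"

definition ENE_relative_RB :: "('k::field \<Rightarrow> 'g::ab_group_add \<Rightarrow> 'g) \<Rightarrow> ('g \<Rightarrow> 'g \<Rightarrow> 'g) \<Rightarrow> ('g \<Rightarrow> 'g) \<Rightarrow>
    ('k \<Rightarrow> 'w::ab_group_add \<Rightarrow> 'w) \<Rightarrow> ('w \<Rightarrow> 'w) \<Rightarrow> ('g \<Rightarrow> 'w \<Rightarrow> 'w) \<Rightarrow> ('w \<Rightarrow> 'g) \<Rightarrow> bool" where
  "ENE_relative_RB s br E sw T rho K \<longleftrightarrow> is_linear sw s K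
     \<and> (\<forall>u v. br (K u) (K v) = K (rho (K u) v - rho (K v) u))
     \<and> (\<forall>u. E (K u) = K (T u))"

definition K_bracket :: "('g \<Rightarrow> 'w \<Rightarrow> 'w::ab_group_add) \<Rightarrow> ('w \<Rightarrow> 'g) \<Rightarrow> 'w \<Rightarrow> 'w \<Rightarrow> 'w" where
  "K_bracket rho K u v = rho (K u) v - rho (K v) u"

end

theory Submission
  imports Defs
begin

lemma lin_add: "is_linear s1 s2 f \<Longrightarrow> f (x + y) = f x + f y"
  unfolding is_linear_def Vector_Spaces.linear_iff by blast

lemma lin_scale: "is_linear s1 s2 f \<Longrightarrow> f (s1 c x) = s2 c (f x)"
  unfolding is_linear_def Vector_Spaces.linear_iff by blast

lemma lin_vs: "is_linear s1 s2 f \<Longrightarrow> vector_space s2"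
  unfolding is_linear_def Vector_Spaces.linear_iff by blast

lemma lin_diff: "is_linear s1 s2 f \<Longrightarrow> f (x - y) = f x - f y"
proof -
  assume l: "is_linear s1 s2 f"
  have "f (x - y) + f y = f x" using lin_add[OF l, of "x - y" y] by simp
  then show ?thesis by (simp add: eq_diff_eq)
qed

theorem proposition6p3:
  fixes s :: "'k::field_char_0 \<Rightarrow> 'g::ab_group_add \<Rightarrow> 'g"
    and sw :: "'k \<Rightarrow> 'w::ab_group_add \<Rightarrow> 'w"
    and br :: "'g \<Rightarrow> 'g \<Rightarrow> 'g" and E :: "'g \<Rightarrow> 'g"
    and T :: "'w \<Rightarrow> 'w" and rho :: "'g \<Rightarrow> 'w \<Rightarrow> 'w" and K :: "'w \<Rightarrow> 'g"
  assumes "\<forall>p :: 'k poly. degree p \<ge> 1 \<longrightarrow> (\<exists>z. poly p z = 0)"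
    and "fin_vs s" and "fin_vs sw"
    and "ENL_algebra s br E"
    and "ENE_rep s br E sw T rho"
    and "ENE_relative_RB s br E sw T rho K"
  shows "ENL_algebra sw (K_bracket rho K) T"
proof -
  have vsw: "vector_space sw" and radd: "\<And>x y u. rho (x + y) u = rho x u + rho y u"
    and rsc: "\<And>c x u. rho (s c x) u = sw c (rho x u)"
    and rlin: "\<And>x. is_linear sw sw (rho x)"
    and rbr: "\<And>x y u. rho (br x y) u = rho x (rho y u) - rho y (rho x u)"
    and Tlin: "is_linear sw sw T"
    and TE: "\<And>x u. T (rho x u) = rho (E x) u" and ET: "\<And>x u. rho (E x) u = rho x (T u)"
    using assms(5) unfolding ENE_rep_def lie_rep_def by auto
  have Klin: "is_linear sw s K" and KK: "\<And>u v. br (K u) (K v) = K (rho (K u) v - rho (K v) u)"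
    and EK: "\<And>u. E (K u) = K (T u)"
    using assms(6) unfolding ENE_relative_RB_def by auto
  have vs: "vector_space s" using assms(4) unfolding ENL_algebra_def lie_algebra_def by auto
  have rdiff: "\<And>x y u. rho (x - y) u = rho x u - rho y u"
  proof -
    fix x y u
    have "rho (x - y) u + rho y u = rho x u" using radd[of "x - y" y u] by simp
    then show "rho (x - y) u = rho x u - rho y u" by (simp add: eq_diff_eq)
  qed
  have sdiff: "\<And>c a b. sw c (a - b) = sw c a - sw c b"
  proof -
    fix c a b
    have "sw c (a - b) + sw c b = sw c a"
      using vsw unfolding vector_space_def module_def by (metis diff_add_cancel)
    then show "sw c (a - b) = sw c a - sw c b" by (simp add: eq_diff_eq)
  qed
  have l1: "is_linear sw sw (K_bracket rho K x)" for x
    unfolding is_linear_def Vector_Spaces.linear_iff K_bracket_def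
    using vsw lin_add[OF rlin] lin_scale[OF rlin] lin_add[OF Klin] lin_scale[OF Klin] radd rsc
    by (simp add: sdiff)
  have l2: "is_linear sw sw (\<lambda>y. K_bracket rho K y x)" for x
    unfolding is_linear_def Vector_Spaces.linear_iff K_bracket_def
    using vsw lin_add[OF rlin] lin_scale[OF rlin] lin_add[OF Klin] lin_scale[OF Klin] radd rsc
    by (simp add: sdiff)
  have jac: "K_bracket rho K x (K_bracket rho K y z) + K_bracket rho K y (K_bracket rho K z x)
      + K_bracket rho K z (K_bracket rho K x y) = 0" for x y z
  proof -
    have e: "K_bracket rho K a (K_bracket rho K b c) =
       rho (K a) (rho (K b) c) - rho (K a) (rho (K c) b)
       - (rho (K b) (rho (K c) a) - rho (K c) (rho (K b) a))" for a b c
      unfolding K_bracket_def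
      using lin_diff[OF rlin] KK[of b c, symmetric] rbr by simp
    show ?thesis unfolding e by (simp add: algebra_simps)
  qed
  have enl: "T (K_bracket rho K x y) = K_bracket rho K x (T y)" for x y
    unfolding K_bracket_def using lin_diff[OF Tlin] TE ET EK by metis
  show ?thesis unfolding ENL_algebra_def lie_algebra_def
    using vsw l1 l2 jac enl Tlin by (simp add: K_bracket_def)
qed

end
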